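(* Let $A, B \subseteq \omega$ be infinite. Then there is a single enumeration functional $\Psi$ with $\Psi(C) = A$ for every infinite $C \subseteq B$ if and only if there is a single relative c.e. operator $\Theta$ with $\Theta(C) = A$ for every infinite $C\subseteq B$.
   Context: An enumeration functional is a c.e. set $\Psi$ of pairs $(E,F)$ of finite subsets of $\omega$, with $\Psi(X) = \bigcup\{F : \exists E\subseteq X\ (E,F)\in\Psi\}$ (it uses only positive information about $X$). A relative c.e. operator is a c.e. set $\Theta$ of pairs $(\sigma,x)\in 2^{<\omega}\times\omega$, with $\Theta(X)$ the set of $x$ such that $(\sigma,x)\in\Theta$ for some initial segment $\sigma$ of the characteristic function of $X$ (it may use both positive and negative information). *)

theory Defs
  imports Main "HOL-Library.Nat_Bijection"
begin

inductive prim_rec :: "nat \<Rightarrow> (nat list \<Rightarrow> nat) \<Rightarrow> bool" where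
  pr_zero: "prim_rec n (\<lambda>_. 0)"
| pr_succ: "prim_rec 1 (\<lambda>xs. Suc (hd xs))"
| pr_proj: "i < n \<Longrightarrow> prim_rec n (\<lambda>xs. xs ! i)"
| pr_comp: "prim_rec m g \<Longrightarrow> length fs = m \<Longrightarrow> (\<forall>i<m. prim_rec n (fs ! i))
            \<Longrightarrow> prim_rec n (\<lambda>xs. g (map (\<lambda>f. f xs) fs))"
| pr_rec: "prim_rec n g \<Longrightarrow> prim_rec (Suc (Suc n)) h
            \<Longrightarrow> prim_rec (Suc n)
                 (\<lambda>xs. rec_nat (g (tl xs)) (\<lambda>y r. h (y # r # tl xs)) (hd xs))"

text \<open>A set of naturals is c.e. iff it is the projection of a primitive recursive
  (binary) relation (Kleene normal form).\<close>
definition ce :: "nat set \<Rightarrow> bool" where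
  "ce S \<longleftrightarrow> (\<exists>f. prim_rec 2 f \<and> S = {x. \<exists>y. f [x, y] \<noteq> 0})"

definition enum_functional :: "(nat set \<times> nat set) set \<Rightarrow> bool" where
  "enum_functional \<Psi> \<longleftrightarrow>
     (\<forall>(E, F)\<in>\<Psi>. finite E \<and> finite F) \<and>
     ce {prod_encode (set_encode E, set_encode F) | E F. (E, F) \<in> \<Psi>}"

definition enum_apply :: "(nat set \<times> nat set) set \<Rightarrow> nat set \<Rightarrow> nat set" where
  "enum_apply \<Psi> X = \<Union>{F. \<exists>E. E \<subseteq> X \<and> (E, F) \<in> \<Psi>}"

definition string_code :: "bool list \<Rightarrow> nat" where
  "string_code \<sigma> = list_encode (map of_bool \<sigma>)"

definition rel_ce_operator :: "(bool list \<times> nat) set \<Rightarrow> bool" where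
  "rel_ce_operator \<Theta> \<longleftrightarrow> ce {prod_encode (string_code \<sigma>, x) | \<sigma> x. (\<sigma>, x) \<in> \<Theta>}"

definition initial_seg :: "bool list \<Rightarrow> nat set \<Rightarrow> bool" where
  "initial_seg \<sigma> X \<longleftrightarrow> (\<forall>i < length \<sigma>. \<sigma> ! i = (i \<in> X))"

definition op_apply :: "(bool list \<times> nat) set \<Rightarrow> nat set \<Rightarrow> nat set" where
  "op_apply \<Theta> X = {x. \<exists>\<sigma>. initial_seg \<sigma> X \<and> (\<sigma>, x) \<in> \<Theta>}"

end

theory Submission
  imports Defs
begin


definition PRF :: "nat \<Rightarrow> (nat list \<Rightarrow> nat) \<Rightarrow> bool" where
  "PRF n f \<longleftrightarrow> (\<exists>g. prim_rec n g \<and> (\<forall>xs. length xs = n \<longrightarrow> g xs = f xs))"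

lemma prim_rec_PRF: "prim_rec n f \<Longrightarrow> PRF n f"
  unfolding PRF_def by blast

lemma PRF_cong: "PRF n f \<Longrightarrow> (\<And>xs. length xs = n \<Longrightarrow> f xs = g xs) \<Longrightarrow> PRF n g"
  unfolding PRF_def by metis

lemma PRF_const0: "PRF n (\<lambda>_. 0)"
  unfolding PRF_def using pr_zero by blast

lemma PRF_proj: "i < n \<Longrightarrow> PRF n (\<lambda>xs. xs ! i)"
  unfolding PRF_def using pr_proj by blast

lemma PRF_succ1: "PRF 1 (\<lambda>xs. Suc (xs ! 0))"
  unfolding PRF_def using pr_succ by (metis hd_conv_nth list.size(3) zero_neq_one)

lemma PRF_comp:
  assumes g: "PRF m g" and l: "length fs = m" and fs: "\<forall>i<m. PRF n (fs ! i)"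
  shows "PRF n (\<lambda>xs. g (map (\<lambda>f. f xs) fs))"
proof -
  obtain g' where g': "prim_rec m g'" "\<forall>xs. length xs = m \<longrightarrow> g' xs = g xs"
    using g unfolding PRF_def by blast
  have "\<forall>i<m. \<exists>h. prim_rec n h \<and> (\<forall>xs. length xs = n \<longrightarrow> h xs = (fs!i) xs)"
    using fs unfolding PRF_def by blast
  then obtain H where H: "\<forall>i<m. prim_rec n (H i) \<and> (\<forall>xs. length xs = n \<longrightarrow> H i xs = (fs!i) xs)"
    by metis
  define hs where "hs = map H [0..<m]"
  have "prim_rec n (\<lambda>xs. g' (map (\<lambda>f. f xs) hs))"
    by (rule pr_comp[OF g'(1)]) (auto simp: hs_def H)
  moreover have "\<forall>xs. length xs = n \<longrightarrow> g' (map (\<lambda>f. f xs) hs) = g (map (\<lambda>f. f xs) fs)"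
  proof (intro allI impI)
    fix xs :: "nat list" assume "length xs = n"
    then have "map (\<lambda>f. f xs) hs = map (\<lambda>f. f xs) fs"
      using l H by (auto simp: hs_def intro!: nth_equalityI)
    then show "g' (map (\<lambda>f. f xs) hs) = g (map (\<lambda>f. f xs) fs)"
      using g'(2) l by simp
  qed
  ultimately show ?thesis unfolding PRF_def by blast
qed

lemma PRF_rec:
  assumes g: "PRF n g" and h: "PRF (Suc (Suc n)) h"
    and F0: "\<And>xs. length xs = n \<Longrightarrow> F (0 # xs) = g xs"
    and FS: "\<And>y xs. length xs = n \<Longrightarrow> F (Suc y # xs) = h (y # F (y # xs) # xs)"
  shows "PRF (Suc n) F"
proof -
  obtain g' where g': "prim_rec n g'" "\<forall>xs. length xs = n \<longrightarrow> g' xs = g xs"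
    using g unfolding PRF_def by blast
  obtain h' where h': "prim_rec (Suc (Suc n)) h'" "\<forall>xs. length xs = Suc (Suc n) \<longrightarrow> h' xs = h xs"
    using h unfolding PRF_def by blast
  have "prim_rec (Suc n) (\<lambda>xs. rec_nat (g' (tl xs)) (\<lambda>y r. h' (y # r # tl xs)) (hd xs))"
    by (rule pr_rec[OF g'(1) h'(1)])
  moreover have "rec_nat (g' (tl xs)) (\<lambda>y r. h' (y # r # tl xs)) (hd xs) = F xs"
    if "length xs = Suc n" for xs
  proof -
    obtain y ys where xs: "xs = y # ys" and ys: "length ys = n"
      using \<open>length xs = Suc n\<close> by (cases xs) auto
    have "rec_nat (g' ys) (\<lambda>y r. h' (y # r # ys)) y = F (y # ys)"
      by (induction y) (simp_all add: ys g' h' F0 FS)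
    then show ?thesis by (simp add: xs)
  qed
  ultimately show ?thesis unfolding PRF_def by blast
qed

lemma hd_nth0: "length xs = Suc n \<Longrightarrow> hd xs = xs ! 0"
  by (cases xs) auto

lemma nth_less_Suc: "(\<forall>i<Suc m. P i) \<longleftrightarrow> P 0 \<and> (\<forall>i<m. P (Suc i))"
  using less_Suc_eq_0_disj by auto

lemma PRF_comp1: "PRF 1 g \<Longrightarrow> PRF n a \<Longrightarrow> PRF n (\<lambda>xs. g [a xs])"
  using PRF_comp[of 1 g "[a]" n] by simp

lemma PRF_comp2: "PRF 2 g \<Longrightarrow> PRF n a \<Longrightarrow> PRF n b \<Longrightarrow> PRF n (\<lambda>xs. g [a xs, b xs])"
  using PRF_comp[of 2 g "[a,b]" n] by (simp add: numeral_2_eq_2 nth_less_Suc)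

lemma PRF_comp3: "PRF 3 g \<Longrightarrow> PRF n a \<Longrightarrow> PRF n b \<Longrightarrow> PRF n c \<Longrightarrow> PRF n (\<lambda>xs. g [a xs, b xs, c xs])"
  using PRF_comp[of 3 g "[a,b,c]" n] by (simp add: numeral_3_eq_3 nth_less_Suc)

lemma PRF_lift: "PRF n f \<Longrightarrow> PRF (Suc n) (\<lambda>ys. f (tl ys))"
proof -
  assume f: "PRF n f"
  have "PRF (Suc n) (\<lambda>ys. f (map (\<lambda>g. g ys) (map (\<lambda>j ys. ys ! Suc j) [0..<n])))"
    by (rule PRF_comp[OF f]) (auto intro: PRF_proj)
  then show ?thesis
    by (rule PRF_cong) (auto intro!: arg_cong[where f=f] nth_equalityI simp: nth_tl)
qed

lemma PRF_hd: "PRF (Suc n) (\<lambda>xs. hd xs)"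
  by (rule PRF_cong[OF PRF_proj[of 0]]) (auto simp: hd_nth0)

lemma PRF_drop2: "PRF (Suc n) Q \<Longrightarrow> PRF (Suc (Suc n)) (\<lambda>ys. Q (hd ys # tl (tl ys)))"
proof -
  assume f: "PRF (Suc n) Q"
  have "PRF (Suc (Suc n)) (\<lambda>ys. Q (map (\<lambda>g. g ys) ((\<lambda>ys. ys ! 0) # map (\<lambda>j ys. ys ! Suc (Suc j)) [0..<n])))"
    by (rule PRF_comp[OF f]) (auto intro: PRF_proj simp: nth_Cons split: nat.split)
  then show ?thesis
    by (rule PRF_cong) (auto intro!: arg_cong[where f=Q] nth_equalityI simp: nth_tl hd_nth0 nth_Cons split: nat.split)
qed

lemma PRF_subst0: "PRF (Suc n) E \<Longrightarrow> PRF n b \<Longrightarrow> PRF n (\<lambda>xs. E (b xs # xs))"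
proof -
  assume f: "PRF (Suc n) E" and b: "PRF n b"
  have "PRF n (\<lambda>xs. E (map (\<lambda>g. g xs) (b # map (\<lambda>j xs. xs ! j) [0..<n])))"
    by (rule PRF_comp[OF f]) (auto intro: PRF_proj b simp: nth_Cons split: nat.split)
  then show ?thesis
    by (rule PRF_cong) (auto intro!: arg_cong[where f=E] nth_equalityI simp: nth_Cons split: nat.split)
qed

lemma PRF_add2: "PRF 2 (\<lambda>xs. xs ! 0 + xs ! 1)"
  unfolding numeral_2_eq_2
proof (rule PRF_rec[where g="\<lambda>xs. xs!0" and h="\<lambda>ys. Suc (ys ! 1)"])
  show "PRF (Suc 0) (\<lambda>xs. xs ! 0)" by (rule PRF_proj) simp
  show "PRF (Suc (Suc (Suc 0))) (\<lambda>ys. Suc (ys ! 1))"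
    using PRF_comp1[OF PRF_succ1 PRF_proj[of 1 "Suc (Suc (Suc 0))"]] by simp
qed auto

lemma PRF_add: "PRF n a \<Longrightarrow> PRF n b \<Longrightarrow> PRF n (\<lambda>xs. a xs + b xs)"
  using PRF_comp2[OF PRF_add2] by simp

lemma PRF_Suc: "PRF n a \<Longrightarrow> PRF n (\<lambda>xs. Suc (a xs))"
  using PRF_comp1[OF PRF_succ1] by simp

lemma PRF_const: "PRF n (\<lambda>_. c)"
  by (induction c) (auto intro: PRF_const0 PRF_Suc[of n "\<lambda>_. _", simplified])

lemma PRF_mult2: "PRF 2 (\<lambda>xs. xs ! 0 * xs ! 1)"
  unfolding numeral_2_eq_2
proof (rule PRF_rec[where g="\<lambda>xs. 0" and h="\<lambda>ys. ys ! 1 + ys ! 2"])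
  show "PRF (Suc 0) (\<lambda>xs. 0)" by (rule PRF_const0)
  show "PRF (Suc (Suc (Suc 0))) (\<lambda>ys. ys ! 1 + ys ! 2)"
    by (rule PRF_add; rule PRF_proj; simp)
qed auto

lemma PRF_mult: "PRF n a \<Longrightarrow> PRF n b \<Longrightarrow> PRF n (\<lambda>xs. a xs * b xs)"
  using PRF_comp2[OF PRF_mult2] by simp

lemma PRF_pred1: "PRF 1 (\<lambda>xs. xs ! 0 - 1)"
  unfolding One_nat_def
proof (rule PRF_rec[where g="\<lambda>xs. 0" and h="\<lambda>ys. ys ! 0"])
  show "PRF 0 (\<lambda>xs. 0)" by (rule PRF_const0)
  show "PRF (Suc (Suc 0)) (\<lambda>ys. ys ! 0)" by (rule PRF_proj) simp
qed auto

lemma PRF_monus2: "PRF 2 (\<lambda>xs. xs ! 1 - xs ! 0)"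
  unfolding numeral_2_eq_2
proof (rule PRF_rec[where g="\<lambda>xs. xs!0" and h="\<lambda>ys. ys ! 1 - 1"])
  show "PRF (Suc 0) (\<lambda>xs. xs ! 0)" by (rule PRF_proj) simp
  show "PRF (Suc (Suc (Suc 0))) (\<lambda>ys. ys ! 1 - 1)"
    using PRF_comp1[OF PRF_pred1 PRF_proj[of 1 "Suc (Suc (Suc 0))"]] by simp
qed auto

lemma PRF_minus: "PRF n a \<Longrightarrow> PRF n b \<Longrightarrow> PRF n (\<lambda>xs. a xs - b xs)"
  using PRF_comp2[OF PRF_monus2, of n b a] by simp

definition PRB :: "nat \<Rightarrow> (nat list \<Rightarrow> bool) \<Rightarrow> bool" where
  "PRB n P \<longleftrightarrow> PRF n (\<lambda>xs. of_bool (P xs))"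

lemma PRB_eq: "PRF n a \<Longrightarrow> PRF n b \<Longrightarrow> PRB n (\<lambda>xs. a xs = b xs)"
  unfolding PRB_def
  by (rule PRF_cong[OF PRF_minus[OF PRF_const[of n 1] PRF_add[OF PRF_minus[of n a b] PRF_minus[of n b a]]]]) auto

lemma PRB_less: "PRF n a \<Longrightarrow> PRF n b \<Longrightarrow> PRB n (\<lambda>xs. a xs < b xs)"
  unfolding PRB_def
  by (rule PRF_cong[OF PRF_minus[OF PRF_const[of n 1] PRF_minus[OF PRF_const[of n 1] PRF_minus[of n b a]]]]) auto

lemma PRB_le: "PRF n a \<Longrightarrow> PRF n b \<Longrightarrow> PRB n (\<lambda>xs. a xs \<le> b xs)"
  using PRB_less[of n a "\<lambda>xs. Suc (b xs)"] PRF_Suc by (simp add: less_Suc_eq_le)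

lemma PRB_conj: "PRB n P \<Longrightarrow> PRB n Q \<Longrightarrow> PRB n (\<lambda>xs. P xs \<and> Q xs)"
  unfolding PRB_def by (rule PRF_cong[OF PRF_mult[of n "\<lambda>xs. of_bool (P xs)" "\<lambda>xs. of_bool (Q xs)"]]) auto

lemma PRB_not: "PRB n P \<Longrightarrow> PRB n (\<lambda>xs. \<not> P xs)"
  unfolding PRB_def by (rule PRF_cong[OF PRF_minus[OF PRF_const[of n 1]]]) auto

lemma PRB_disj: "PRB n P \<Longrightarrow> PRB n Q \<Longrightarrow> PRB n (\<lambda>xs. P xs \<or> Q xs)"
  using PRB_not[OF PRB_conj[OF PRB_not PRB_not], of n P Q] by simp

lemma PRB_imp: "PRB n P \<Longrightarrow> PRB n Q \<Longrightarrow> PRB n (\<lambda>xs. P xs \<longrightarrow> Q xs)"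
  using PRB_disj[OF PRB_not, of n P Q] by simp

lemma PRB_True: "PRB n (\<lambda>xs. True)"
  unfolding PRB_def using PRF_const by simp

lemma PRB_lift: "PRB n P \<Longrightarrow> PRB (Suc n) (\<lambda>ys. P (tl ys))"
  unfolding PRB_def by (rule PRF_lift)

lemma PRF_bex_aux:
  assumes P: "PRB (Suc n) (\<lambda>ys. P (hd ys) (tl ys))"
  shows "PRB (Suc n) (\<lambda>ys. \<exists>i<hd ys. P i (tl ys))"
  unfolding PRB_def
proof (rule PRF_rec[where g="\<lambda>_. 0" and h="\<lambda>ys. of_bool (ys ! 1 \<noteq> 0 \<or> P (hd ys) (tl (tl ys)))"])
  show "PRF n (\<lambda>_. 0)" by (rule PRF_const0)
  have a: "PRB (Suc (Suc n)) (\<lambda>ys. ys ! 1 \<noteq> 0)"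
    by (rule PRB_not, rule PRB_eq, rule PRF_proj, simp, rule PRF_const)
  have b: "PRB (Suc (Suc n)) (\<lambda>ys. P (hd ys) (tl (tl ys)))"
    using PRF_drop2[OF P[unfolded PRB_def]] unfolding PRB_def by simp
  show "PRF (Suc (Suc n)) (\<lambda>ys. of_bool (ys ! 1 \<noteq> 0 \<or> P (hd ys) (tl (tl ys))))"
    using PRB_disj[OF a b] unfolding PRB_def .
next
  fix y and xs :: "nat list"
  show "of_bool (\<exists>i<hd (Suc y # xs). P i (tl (Suc y # xs))) =
        of_bool ((y # of_bool (\<exists>i<hd (y # xs). P i (tl (y # xs))) # xs) ! 1 \<noteq> 0 \<or>
            P (hd (y # of_bool (\<exists>i<hd (y # xs). P i (tl (y # xs))) # xs))
             (tl (tl (y # of_bool (\<exists>i<hd (y # xs). P i (tl (y # xs))) # xs))))"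
    by (auto simp: less_Suc_eq)
qed simp

lemma PRB_bex: "PRF n b \<Longrightarrow> PRB (Suc n) (\<lambda>ys. P (hd ys) (tl ys)) \<Longrightarrow> PRB n (\<lambda>xs. \<exists>i<b xs. P i xs)"
  using PRF_subst0[OF PRF_bex_aux[unfolded PRB_def]] unfolding PRB_def by simp

lemma PRB_ball: "PRF n b \<Longrightarrow> PRB (Suc n) (\<lambda>ys. P (hd ys) (tl ys)) \<Longrightarrow> PRB n (\<lambda>xs. \<forall>i<b xs. P i xs)"
  using PRB_not[OF PRB_bex[OF _ PRB_not, of n b "\<lambda>i xs. P i xs"]] by simp

lemma PRF_if: "PRB n P \<Longrightarrow> PRF n a \<Longrightarrow> PRF n b \<Longrightarrow> PRF n (\<lambda>xs. if P xs then a xs else b xs)"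
  unfolding PRB_def
  by (rule PRF_cong[OF PRF_add[OF PRF_mult[of n "\<lambda>xs. of_bool (P xs)" a] PRF_mult[OF PRF_minus[OF PRF_const[of n 1], of "\<lambda>xs. of_bool (P xs)"], of b]]]) auto

lemma PRF_ofbool: "PRB n P \<Longrightarrow> PRF n (\<lambda>xs. of_bool (P xs))"
  unfolding PRB_def .

lemma PRF_triangle1: "PRF 1 (\<lambda>xs. triangle (xs ! 0))"
  unfolding One_nat_def
proof (rule PRF_rec[where g="\<lambda>xs. 0" and h="\<lambda>ys. ys ! 1 + Suc (ys ! 0)"])
  show "PRF 0 (\<lambda>xs. 0)" by (rule PRF_const0)
  show "PRF (Suc (Suc 0)) (\<lambda>ys. ys ! 1 + Suc (ys ! 0))"
    by (intro PRF_add PRF_Suc PRF_proj) auto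
qed auto

lemma PRF_pe: "PRF n a \<Longrightarrow> PRF n b \<Longrightarrow> PRF n (\<lambda>xs. prod_encode (a xs, b xs))"
  unfolding prod_encode_def
  using PRF_add[OF PRF_comp1[OF PRF_triangle1 PRF_add[of n a b]], of a] by simp

lemma PRF_pow2_1: "PRF 1 (\<lambda>xs. 2 ^ (xs ! 0))"
  unfolding One_nat_def
proof (rule PRF_rec[where g="\<lambda>xs. 1" and h="\<lambda>ys. ys ! 1 + ys ! 1"])
  show "PRF 0 (\<lambda>xs. 1)" by (rule PRF_const)
  show "PRF (Suc (Suc 0)) (\<lambda>ys. ys ! 1 + ys ! 1)"
    by (intro PRF_add PRF_proj) auto
qed auto

lemma PRF_pow2: "PRF n a \<Longrightarrow> PRF n (\<lambda>xs. 2 ^ a xs)"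
  using PRF_comp1[OF PRF_pow2_1] by simp

lemma PRF_mod2_1: "PRF 1 (\<lambda>xs. xs ! 0 mod 2)"
  unfolding One_nat_def
proof (rule PRF_rec[where g="\<lambda>xs. 0" and h="\<lambda>ys. 1 - ys ! 1"])
  show "PRF 0 (\<lambda>xs. 0)" by (rule PRF_const)
  show "PRF (Suc (Suc 0)) (\<lambda>ys. 1 - ys ! 1)"
    by (intro PRF_minus PRF_proj PRF_const) auto
qed (auto simp: mod_Suc)

lemma Suc_div2': "Suc y div 2 = y div 2 + y mod (2::nat)"
  by presburger

lemma divpow_aux: "x div (Suc (Suc 0)^y + Suc (Suc 0)^y) = x div Suc (Suc 0)^y div (2::nat)"
  by (metis div_mult2_eq mult_2_right numeral_2_eq_2 mult.commute)

lemma PRF_half1: "PRF 1 (\<lambda>xs. xs ! 0 div 2)"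
  unfolding One_nat_def
proof (rule PRF_rec[where g="\<lambda>xs. 0" and h="\<lambda>ys. ys ! 1 + ys ! 0 mod 2"])
  show "PRF 0 (\<lambda>xs. 0)" by (rule PRF_const)
  show "PRF (Suc (Suc 0)) (\<lambda>ys. ys ! 1 + ys ! 0 mod 2)"
    by (intro PRF_add PRF_proj PRF_comp1[OF PRF_mod2_1, simplified]) auto
qed (simp_all add: Suc_div2')

lemma PRF_half: "PRF n a \<Longrightarrow> PRF n (\<lambda>xs. a xs div 2)"
  using PRF_comp1[OF PRF_half1] by simp

lemma PRF_divpow2: "PRF 2 (\<lambda>xs. xs ! 1 div 2 ^ (xs ! 0))"
  unfolding numeral_2_eq_2
proof (rule PRF_rec[where g="\<lambda>xs. xs ! 0" and h="\<lambda>ys. ys ! 1 div 2"])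
  show "PRF (Suc 0) (\<lambda>xs. xs ! 0)" by (rule PRF_proj) simp
  show "PRF (Suc (Suc (Suc 0))) (\<lambda>ys. ys ! 1 div 2)"
    by (intro PRF_half PRF_proj) auto
qed (auto simp: divpow_aux)

lemma PRF_divpow: "PRF n a \<Longrightarrow> PRF n b \<Longrightarrow> PRF n (\<lambda>xs. a xs div 2 ^ b xs)"
  using PRF_comp2[OF PRF_divpow2, of n b a] by simp

lemma PRB_odd: "PRF n a \<Longrightarrow> PRB n (\<lambda>xs. odd (a xs))"
  unfolding PRB_def
proof -
  assume "PRF n a"
  then have "PRF n (\<lambda>xs. a xs mod 2)" using PRF_comp1[OF PRF_mod2_1, of n a] by simp
  then show "PRF n (\<lambda>xs. of_bool (odd (a xs)))"
    by (rule PRF_cong) (simp add: mod2_eq_if)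
qed

fun cc :: "nat \<Rightarrow> nat \<Rightarrow> nat \<Rightarrow> nat" where
  "cc m N 0 = 0"
| "cc m N (Suc j) = Suc (prod_encode (of_bool (odd (m div 2 ^ (N - Suc j))), cc m N j))"

lemmas PR_intros = PRF_lift PRB_lift PRF_hd PRF_proj PRF_const PRF_add PRF_minus PRF_mult PRF_Suc
  PRF_pe PRF_divpow PRF_pow2 PRF_if PRF_ofbool PRB_eq PRB_less PRB_le PRB_conj PRB_disj PRB_not PRB_imp
  PRB_odd PRB_bex PRB_ball PRB_True

lemma PRF_cc3: "PRF 3 (\<lambda>xs. cc (xs ! 1) (xs ! 2) (xs ! 0))"
  unfolding numeral_3_eq_3
proof (rule PRF_rec[where g="\<lambda>xs. 0" and
     h="\<lambda>ys. Suc (prod_encode (of_bool (odd (ys ! 2 div 2 ^ (ys ! 3 - Suc (ys ! 0)))), ys ! 1))"])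
  show "PRF (Suc (Suc 0)) (\<lambda>xs. 0)" by (rule PRF_const)
  show "PRF (Suc (Suc (Suc (Suc 0)))) (\<lambda>ys. Suc (prod_encode (of_bool (odd (ys ! 2 div 2 ^ (ys ! 3 - Suc (ys ! 0)))), ys ! 1)))"
    by (intro PR_intros) auto
qed (auto simp: numeral_2_eq_2)

lemma PRF_cc: "PRF n a \<Longrightarrow> PRF n b \<Longrightarrow> PRF n c \<Longrightarrow> PRF n (\<lambda>xs. cc (a xs) (b xs) (c xs))"
  using PRF_comp3[OF PRF_cc3, of n c a b] by simp




lemma ce_intro:
  assumes "PRB (Suc (Suc 0)) (\<lambda>xs. Q (xs ! 0) (xs ! 1))"
  shows "ce {z. \<exists>y. Q z y}"
proof -
  obtain g where g: "prim_rec 2 g" "\<forall>xs. length xs = 2 \<longrightarrow> g xs = of_bool (Q (xs ! 0) (xs ! 1))"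
    using assms unfolding PRB_def PRF_def by (auto simp: numeral_2_eq_2)
  have "{z. \<exists>y. Q z y} = {x. \<exists>y. g [x, y] \<noteq> 0}"
    using g(2) by auto
  then show ?thesis unfolding ce_def using g(1) by blast
qed

lemma ce_elim: "ce S \<Longrightarrow> \<exists>f. PRF 2 f \<and> S = {x. \<exists>y. f [x, y] \<noteq> 0}"
  unfolding ce_def using prim_rec_PRF by blast

definition bl :: "nat \<Rightarrow> nat \<Rightarrow> bool list" where
  "bl m N = map (\<lambda>i. odd (m div 2 ^ i)) [0..<N]"

lemma cc_string: "j \<le> N \<Longrightarrow> cc m N j = string_code (map (\<lambda>i. odd (m div 2 ^ i)) [N - j..<N])"
proof (induction j)
  case 0 then show ?case by (simp add: string_code_def)
next
  case (Suc j)
  have "[N - Suc j..<N] = (N - Suc j) # [N - j..<N]"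
  proof -
    have "N - Suc j < N" using Suc.prems by arith
    moreover have "Suc (N - Suc j) = N - j" using Suc.prems by arith
    ultimately show ?thesis using upt_conv_Cons[of "N - Suc j" N] by (simp only:)
  qed
  have IH: "cc m N j = string_code (map (\<lambda>i. odd (m div 2 ^ i)) [N - j..<N])"
    using Suc by simp
  have "cc m N (Suc j) = Suc (prod_encode (of_bool (odd (m div 2 ^ (N - Suc j))), cc m N j))"
    by (simp only: cc.simps)
  also have "\<dots> = string_code (map (\<lambda>i. odd (m div 2 ^ i)) ((N - Suc j) # [N - j..<N]))"
    by (simp only: IH string_code_def list.map list_encode.simps)
  finally show ?case using \<open>[N - Suc j..<N] = (N - Suc j) # [N - j..<N]\<close> by (simp only:)
qed

lemma cc_bl: "cc m N N = string_code (bl m N)"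
  using cc_string[of N N m] by (simp add: bl_def)

lemma string_code_inj: "string_code s = string_code t \<longleftrightarrow> s = t"
proof
  assume "string_code s = string_code t"
  then have "map of_bool s = (map of_bool t :: nat list)"
    by (simp add: string_code_def list_encode_eq)
  then show "s = t"
    using list.inj_map_strong[of s t "of_bool :: bool \<Rightarrow> nat" "of_bool"] by (simp add: of_bool_eq_iff)
qed simp

lemma bit_ge: "odd (m div 2 ^ i) \<Longrightarrow> 2 ^ i \<le> (m::nat)"
  by (metis div_less even_zero not_le)

lemma bit_less: "odd (m div 2 ^ i) \<Longrightarrow> i < (m::nat)"
proof -
  assume "odd (m div 2 ^ i)"
  then have "2 ^ i \<le> m" by (rule bit_ge)
  moreover have "i < 2 ^ i" by (rule less_exp)
  ultimately show ?thesis by linarith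
qed

lemma mem_set_decode: "i \<in> set_decode m \<longleftrightarrow> odd (m div 2 ^ i)"
  by (simp add: set_decode_def)

lemma bl_nth: "i < N \<Longrightarrow> bl m N ! i = odd (m div 2 ^ i)"
  by (simp add: bl_def)

lemma bl_length[simp]: "length (bl m N) = N"
  by (simp add: bl_def)

lemma set_encode_less: "S \<subseteq> {..<N} \<Longrightarrow> set_encode S < 2 ^ N"
proof -
  assume S: "S \<subseteq> {..<N}"
  have "set_encode S = sum ((^) 2) S" by (simp add: set_encode_def)
  also have "\<dots> \<le> sum ((^) 2) {q. q < N}"
    by (rule sum_mono2) (use S in auto)
  also have "\<dots> = 2 ^ N - 1" by (metis mask_eq_sum_exp)
  also have "\<dots> < 2 ^ N" by simp
  finally show ?thesis .
qed

lemma string_as_bl: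
  "\<sigma> = bl (set_encode {i. i < length \<sigma> \<and> \<sigma> ! i}) (length \<sigma>)"
  "set_decode (set_encode {i. i < length \<sigma> \<and> \<sigma> ! i}) = {i. i < length \<sigma> \<and> \<sigma> ! i}"
  "set_encode {i. i < length \<sigma> \<and> \<sigma> ! i} < 2 ^ length \<sigma>"
proof -
  have fin: "finite {i. i < length \<sigma> \<and> \<sigma> ! i}" by simp
  show 2: "set_decode (set_encode {i. i < length \<sigma> \<and> \<sigma> ! i}) = {i. i < length \<sigma> \<and> \<sigma> ! i}"
    using fin by simp
  show "\<sigma> = bl (set_encode {i. i < length \<sigma> \<and> \<sigma> ! i}) (length \<sigma>)"
  proof (rule nth_equalityI)
    fix i assume i: "i < length \<sigma>"
    have "bl (set_encode {i. i < length \<sigma> \<and> \<sigma> ! i}) (length \<sigma>) ! i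
        = (i \<in> set_decode (set_encode {i. i < length \<sigma> \<and> \<sigma> ! i}))"
      by (simp only: bl_nth[OF i] mem_set_decode)
    also have "\<dots> = (i \<in> {i. i < length \<sigma> \<and> \<sigma> ! i})" by (simp only: 2)
    finally show "\<sigma> ! i = bl (set_encode {i. i < length \<sigma> \<and> \<sigma> ! i}) (length \<sigma>) ! i"
      using i by simp
  qed simp
  show "set_encode {i. i < length \<sigma> \<and> \<sigma> ! i} < 2 ^ length \<sigma>"
    by (rule set_encode_less) auto
qed

lemma dir1:
  assumes ef: "enum_functional \<Psi>"
  shows "\<exists>\<Theta>. rel_ce_operator \<Theta> \<and> (\<forall>C. op_apply \<Theta> C = enum_apply \<Psi> C)"
proof -
  have fin: "\<And>E F. (E, F) \<in> \<Psi> \<Longrightarrow> finite E \<and> finite F"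
    using ef unfolding enum_functional_def by blast
  have "ce {prod_encode (set_encode E, set_encode F) | E F. (E, F) \<in> \<Psi>}"
    using ef unfolding enum_functional_def by blast
  from ce_elim[OF this] obtain f where fPS: "PRF 2 f \<and>
    {prod_encode (set_encode E, set_encode F) | E F. (E, F) \<in> \<Psi>} = {x. \<exists>y. f [x, y] \<noteq> 0}" ..
  have fP: "PRF 2 f" using fPS by (rule conjunct1)
  have fS: "{prod_encode (set_encode E, set_encode F) | E F. (E, F) \<in> \<Psi>} = {x. \<exists>y. f [x, y] \<noteq> 0}"
    using fPS by (rule conjunct2)
  define \<Theta> where "\<Theta> = {(bl m N, x) | m N x. \<exists>E F. (E, F) \<in> \<Psi> \<and> E \<subseteq> {i. i < N \<and> odd (m div 2 ^ i)} \<and> x \<in> F}"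
  define P where "P z m N e u w x \<longleftrightarrow> z = prod_encode (cc m N N, x) \<and> f [prod_encode (e, u), w] \<noteq> 0
      \<and> odd (u div 2 ^ x) \<and> (\<forall>i<e. odd (e div 2 ^ i) \<longrightarrow> i < N \<and> odd (m div 2 ^ i))" for z m N e u w x
  have key: "z \<in> {prod_encode (string_code \<sigma>, x) | \<sigma> x. (\<sigma>, x) \<in> \<Theta>} \<longleftrightarrow> (\<exists>m N e u w x. P z m N e u w x)" for z
  proof
    assume "z \<in> {prod_encode (string_code \<sigma>, x) | \<sigma> x. (\<sigma>, x) \<in> \<Theta>}"
    then obtain m N x E F where z: "z = prod_encode (string_code (bl m N), x)" and EF: "(E, F) \<in> \<Psi>"
      and sub: "E \<subseteq> {i. i < N \<and> odd (m div 2 ^ i)}" and xF: "x \<in> F"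
      unfolding \<Theta>_def by blast
    have fE: "finite E" and fF: "finite F" using fin[OF EF] by auto
    have "prod_encode (set_encode E, set_encode F) \<in> {prod_encode (set_encode E, set_encode F) | E F. (E, F) \<in> \<Psi>}"
      using EF by blast
    then have "prod_encode (set_encode E, set_encode F) \<in> {x. \<exists>y. f [x, y] \<noteq> 0}"
      by (simp only: fS)
    then obtain w where w: "f [prod_encode (set_encode E, set_encode F), w] \<noteq> 0" by blast
    have "odd (set_encode F div 2 ^ x)"
      using xF fF by (simp add: mem_set_decode[symmetric])
    moreover have "\<forall>i<set_encode E. odd (set_encode E div 2 ^ i) \<longrightarrow> i < N \<and> odd (m div 2 ^ i)"
      using sub fE by (auto simp: mem_set_decode[symmetric])
    ultimately have "P z m N (set_encode E) (set_encode F) w x"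
      unfolding P_def using z w by (simp add: cc_bl)
    then show "\<exists>m N e u w x. P z m N e u w x" by blast
  next
    assume "\<exists>m N e u w x. P z m N e u w x"
    then obtain m N e u w x where p: "P z m N e u w x" by blast
    then have "prod_encode (e, u) \<in> {x. \<exists>y. f [x, y] \<noteq> 0}" unfolding P_def by blast
    then have "prod_encode (e, u) \<in> {prod_encode (set_encode E, set_encode F) | E F. (E, F) \<in> \<Psi>}"
      by (simp only: fS)
    then obtain E F where EF: "(E, F) \<in> \<Psi>" and eu: "prod_encode (e, u) = prod_encode (set_encode E, set_encode F)"
      by blast
    have fE: "finite E" and fF: "finite F" using fin[OF EF] by auto
    have e: "e = set_encode E" and u: "u = set_encode F" using eu by auto
    have xF: "x \<in> F"
      using p fF unfolding P_def u by (simp add: mem_set_decode[symmetric])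
    have "E \<subseteq> {i. i < N \<and> odd (m div 2 ^ i)}"
    proof
      fix i assume "i \<in> E"
      then have "odd (e div 2 ^ i)" using fE e by (simp add: mem_set_decode[symmetric])
      moreover from this have "i < e" by (rule bit_less)
      ultimately show "i \<in> {i. i < N \<and> odd (m div 2 ^ i)}" using p unfolding P_def by blast
    qed
    then have "(bl m N, x) \<in> \<Theta>" unfolding \<Theta>_def using EF xF by blast
    moreover have "z = prod_encode (string_code (bl m N), x)" using p unfolding P_def by (simp add: cc_bl)
    ultimately show "z \<in> {prod_encode (string_code \<sigma>, x) | \<sigma> x. (\<sigma>, x) \<in> \<Theta>}" by blast
  qed
  have code: "{prod_encode (string_code \<sigma>, x) | \<sigma> x. (\<sigma>, x) \<in> \<Theta>} =
     {z. \<exists>y. \<exists>m<y. \<exists>N<y. \<exists>e<y. \<exists>u<y. \<exists>w<y. \<exists>x<y. P z m N e u w x}"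
  proof (rule set_eqI)
    fix z
    have "(\<exists>m N e u w x. P z m N e u w x) \<longleftrightarrow> (\<exists>y. \<exists>m<y. \<exists>N<y. \<exists>e<y. \<exists>u<y. \<exists>w<y. \<exists>x<y. P z m N e u w x)"
    proof
      assume "\<exists>m N e u w x. P z m N e u w x"
      then obtain m N e u w x where p: "P z m N e u w x" by blast
      define y where "y = Suc (m + N + e + u + w + x)"
      have "m < y" "N < y" "e < y" "u < y" "w < y" "x < y" unfolding y_def by auto
      then show "\<exists>y. \<exists>m<y. \<exists>N<y. \<exists>e<y. \<exists>u<y. \<exists>w<y. \<exists>x<y. P z m N e u w x" using p by blast
    qed blast
    then show "z \<in> {prod_encode (string_code \<sigma>, x) | \<sigma> x. (\<sigma>, x) \<in> \<Theta>} \<longleftrightarrow>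
       z \<in> {z. \<exists>y. \<exists>m<y. \<exists>N<y. \<exists>e<y. \<exists>u<y. \<exists>w<y. \<exists>x<y. P z m N e u w x}"
      using key by simp
  qed
  have "ce {z. \<exists>y. \<exists>m<y. \<exists>N<y. \<exists>e<y. \<exists>u<y. \<exists>w<y. \<exists>x<y. P z m N e u w x}"
    by (rule ce_intro, unfold P_def, intro PR_intros PRF_comp2[OF fP] PRF_cc) auto
  then have op: "rel_ce_operator \<Theta>" unfolding rel_ce_operator_def code .
  have "op_apply \<Theta> C = enum_apply \<Psi> C" for C
  proof
    show "op_apply \<Theta> C \<subseteq> enum_apply \<Psi> C"
    proof
      fix x assume "x \<in> op_apply \<Theta> C"
      then obtain \<sigma> where isg: "initial_seg \<sigma> C" and th: "(\<sigma>, x) \<in> \<Theta>" unfolding op_apply_def by blast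
      then obtain m N E F where s: "\<sigma> = bl m N" and EF: "(E, F) \<in> \<Psi>"
        and sub: "E \<subseteq> {i. i < N \<and> odd (m div 2 ^ i)}" and xF: "x \<in> F"
        unfolding \<Theta>_def by blast
      have "E \<subseteq> C"
      proof
        fix i assume "i \<in> E"
        then have "i < N" "odd (m div 2 ^ i)" using sub by auto
        then show "i \<in> C" using isg unfolding initial_seg_def s by (auto simp: bl_nth)
      qed
      then show "x \<in> enum_apply \<Psi> C" unfolding enum_apply_def using EF xF by blast
    qed
  next
    show "enum_apply \<Psi> C \<subseteq> op_apply \<Theta> C"
    proof
      fix x assume "x \<in> enum_apply \<Psi> C"
      then obtain E F where EF: "(E, F) \<in> \<Psi>" and EC: "E \<subseteq> C" and xF: "x \<in> F"
        unfolding enum_apply_def by blast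
      have "finite E" using fin[OF EF] by auto
      then have "E \<subseteq> {..<Suc (Max E)}" by (auto simp: less_Suc_eq_le)
      then obtain N where EN: "E \<subseteq> {..<N}" by blast
      define m where "m = set_encode (C \<inter> {..<N})"
      have dm: "set_decode m = C \<inter> {..<N}" unfolding m_def by simp
      have bit: "odd (m div 2 ^ i) \<longleftrightarrow> i \<in> C \<and> i < N" for i
        using dm by (auto simp: mem_set_decode[symmetric])
      have "initial_seg (bl m N) C" unfolding initial_seg_def by (auto simp: bl_nth bit)
      moreover have "(bl m N, x) \<in> \<Theta>"
        unfolding \<Theta>_def using EF xF EC EN bit by blast
      ultimately show "x \<in> op_apply \<Theta> C" unfolding op_apply_def by blast
    qed
  qed
  then show ?thesis using op by blast
qed

lemma dir2:
  assumes rc: "rel_ce_operator \<Theta>" and H: "\<forall>C. C \<subseteq> B \<and> infinite C \<longrightarrow> op_apply \<Theta> C = A"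
  shows "\<exists>\<Psi>. enum_functional \<Psi> \<and> (\<forall>C. C \<subseteq> B \<and> infinite C \<longrightarrow> enum_apply \<Psi> C = A)"
proof -
  from ce_elim[OF rc[unfolded rel_ce_operator_def]] obtain g where gPS: "PRF 2 g \<and>
    {prod_encode (string_code \<sigma>, x) | \<sigma> x. (\<sigma>, x) \<in> \<Theta>} = {x. \<exists>y. g [x, y] \<noteq> 0}" ..
  have gP: "PRF 2 g" using gPS by (rule conjunct1)
  have gS: "{prod_encode (string_code \<sigma>, x) | \<sigma> x. (\<sigma>, x) \<in> \<Theta>} = {x. \<exists>y. g [x, y] \<noteq> 0}"
    using gPS by (rule conjunct2)
  define \<Psi> where "\<Psi> = {(set_decode m, {x}) | m N x. m < 2 ^ N \<and> (bl m N, x) \<in> \<Theta>}"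
  define P where "P z m N x w \<longleftrightarrow> m < 2 ^ N \<and> g [prod_encode (cc m N N, x), w] \<noteq> 0
      \<and> z = prod_encode (m, 2 ^ x)" for z m N x w
  have th: "(bl m N, x) \<in> \<Theta> \<longleftrightarrow> (\<exists>w. g [prod_encode (cc m N N, x), w] \<noteq> 0)" for m N x
  proof -
    have "(bl m N, x) \<in> \<Theta> \<longleftrightarrow> prod_encode (string_code (bl m N), x) \<in> {prod_encode (string_code \<sigma>, x) | \<sigma> x. (\<sigma>, x) \<in> \<Theta>}"
      by (auto simp: string_code_inj)
    also have "\<dots> \<longleftrightarrow> prod_encode (cc m N N, x) \<in> {x. \<exists>y. g [x, y] \<noteq> 0}"
      by (simp only: gS cc_bl)
    finally show ?thesis by simp
  qed
  have key: "z \<in> {prod_encode (set_encode E, set_encode F) | E F. (E, F) \<in> \<Psi>} \<longleftrightarrow> (\<exists>m N x w. P z m N x w)" for z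
  proof
    assume "z \<in> {prod_encode (set_encode E, set_encode F) | E F. (E, F) \<in> \<Psi>}"
    then obtain m N x where z: "z = prod_encode (set_encode (set_decode m), set_encode {x})"
      and m: "m < 2 ^ N" and t: "(bl m N, x) \<in> \<Theta>"
      unfolding \<Psi>_def by blast
    obtain w where "g [prod_encode (cc m N N, x), w] \<noteq> 0" using t th by blast
    then have "P z m N x w" unfolding P_def using z m by simp
    then show "\<exists>m N x w. P z m N x w" by blast
  next
    assume "\<exists>m N x w. P z m N x w"
    then obtain m N x w where p: "P z m N x w" by blast
    then have "(bl m N, x) \<in> \<Theta>" using th unfolding P_def by blast
    then have "(set_decode m, {x}) \<in> \<Psi>" using p unfolding \<Psi>_def P_def by blast
    moreover have "z = prod_encode (set_encode (set_decode m), set_encode {x})"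
      using p unfolding P_def by simp
    ultimately show "z \<in> {prod_encode (set_encode E, set_encode F) | E F. (E, F) \<in> \<Psi>}" by blast
  qed
  have code: "{prod_encode (set_encode E, set_encode F) | E F. (E, F) \<in> \<Psi>} =
     {z. \<exists>y. \<exists>m<y. \<exists>N<y. \<exists>x<y. \<exists>w<y. P z m N x w}"
  proof (rule set_eqI)
    fix z
    have "(\<exists>m N x w. P z m N x w) \<longleftrightarrow> (\<exists>y. \<exists>m<y. \<exists>N<y. \<exists>x<y. \<exists>w<y. P z m N x w)"
    proof
      assume "\<exists>m N x w. P z m N x w"
      then obtain m N x w where p: "P z m N x w" by blast
      define y where "y = Suc (m + N + x + w)"
      have "m < y" "N < y" "x < y" "w < y" unfolding y_def by auto
      then show "\<exists>y. \<exists>m<y. \<exists>N<y. \<exists>x<y. \<exists>w<y. P z m N x w" using p by blast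
    qed blast
    then show "z \<in> {prod_encode (set_encode E, set_encode F) | E F. (E, F) \<in> \<Psi>} \<longleftrightarrow>
       z \<in> {z. \<exists>y. \<exists>m<y. \<exists>N<y. \<exists>x<y. \<exists>w<y. P z m N x w}"
      using key by simp
  qed
  have "ce {z. \<exists>y. \<exists>m<y. \<exists>N<y. \<exists>x<y. \<exists>w<y. P z m N x w}"
    by (rule ce_intro, unfold P_def, intro PR_intros PRF_comp2[OF gP] PRF_cc) auto
  moreover have "\<forall>(E, F)\<in>\<Psi>. finite E \<and> finite F" unfolding \<Psi>_def by auto
  ultimately have ef: "enum_functional \<Psi>" unfolding enum_functional_def code by blast
  have "enum_apply \<Psi> C = A" if CB: "C \<subseteq> B" and Ci: "infinite C" for C
  proof
    show "A \<subseteq> enum_apply \<Psi> C"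
    proof
      fix x assume "x \<in> A"
      then have "x \<in> op_apply \<Theta> C" using H CB Ci by blast
      then obtain \<sigma> where isg: "initial_seg \<sigma> C" and t: "(\<sigma>, x) \<in> \<Theta>" unfolding op_apply_def by blast
      define S where "S = {i. i < length \<sigma> \<and> \<sigma> ! i}"
      have s1: "\<sigma> = bl (set_encode S) (length \<sigma>)" and s2: "set_decode (set_encode S) = S"
        and s3: "set_encode S < 2 ^ length \<sigma>"
        using string_as_bl[of \<sigma>] unfolding S_def by auto
      have "(bl (set_encode S) (length \<sigma>), x) \<in> \<Theta>" using t s1 by simp
      then have "(set_decode (set_encode S), {x}) \<in> \<Psi>" unfolding \<Psi>_def using s3 by blast
      moreover have "S \<subseteq> C" using isg unfolding initial_seg_def S_def by auto
      ultimately show "x \<in> enum_apply \<Psi> C" unfolding enum_apply_def s2 by blast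
    qed
  next
    show "enum_apply \<Psi> C \<subseteq> A"
    proof
      fix x' assume "x' \<in> enum_apply \<Psi> C"
      then obtain E F where EF: "(E, F) \<in> \<Psi>" and EC: "E \<subseteq> C" and xF: "x' \<in> F"
        unfolding enum_apply_def by blast
      then obtain m N x where E: "E = set_decode m" and F: "F = {x}" and t: "(bl m N, x) \<in> \<Theta>"
        unfolding \<Psi>_def by blast
      define C' where "C' = E \<union> {i \<in> C. N \<le> i}"
      have "C' \<subseteq> B" using EC CB unfolding C'_def by auto
      moreover have "infinite C'"
      proof
        assume "finite C'"
        then have "finite {i \<in> C. N \<le> i}" unfolding C'_def by simp
        moreover have "C \<subseteq> {i \<in> C. N \<le> i} \<union> {..<N}" by auto
        ultimately have "finite C" using finite_subset by blast
        then show False using Ci by simp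
      qed
      ultimately have A: "op_apply \<Theta> C' = A" using H by blast
      have "initial_seg (bl m N) C'"
        unfolding initial_seg_def C'_def E by (auto simp: bl_nth mem_set_decode)
      then have "x \<in> op_apply \<Theta> C'" unfolding op_apply_def using t by blast
      then show "x' \<in> A" using A xF F by simp
    qed
  qed
  then show ?thesis using ef by blast
qed

theorem proposition2p1:
  fixes A B :: "nat set"
  assumes "infinite A" and "infinite B"
  shows "(\<exists>\<Psi>. enum_functional \<Psi> \<and>
            (\<forall>C. C \<subseteq> B \<and> infinite C \<longrightarrow> enum_apply \<Psi> C = A))
     \<longleftrightarrow> (\<exists>\<Theta>. rel_ce_operator \<Theta> \<and>
            (\<forall>C. C \<subseteq> B \<and> infinite C \<longrightarrow> op_apply \<Theta> C = A))"
proof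
  assume "\<exists>\<Psi>. enum_functional \<Psi> \<and> (\<forall>C. C \<subseteq> B \<and> infinite C \<longrightarrow> enum_apply \<Psi> C = A)"
  then obtain \<Psi> where ef: "enum_functional \<Psi>" and h: "\<forall>C. C \<subseteq> B \<and> infinite C \<longrightarrow> enum_apply \<Psi> C = A"
    by blast
  obtain \<Theta> where tR: "rel_ce_operator \<Theta>" and tE: "\<forall>C. op_apply \<Theta> C = enum_apply \<Psi> C"
    using dir1[OF ef] by blast
  show "\<exists>\<Theta>. rel_ce_operator \<Theta> \<and> (\<forall>C. C \<subseteq> B \<and> infinite C \<longrightarrow> op_apply \<Theta> C = A)"
    by (rule exI[of _ \<Theta>]) (simp add: tR tE h)
next
  assume "\<exists>\<Theta>. rel_ce_operator \<Theta> \<and> (\<forall>C. C \<subseteq> B \<and> infinite C \<longrightarrow> op_apply \<Theta> C = A)"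
  then obtain \<Theta> where "rel_ce_operator \<Theta>" and "\<forall>C. C \<subseteq> B \<and> infinite C \<longrightarrow> op_apply \<Theta> C = A"
    by blast
  then show "\<exists>\<Psi>. enum_functional \<Psi> \<and> (\<forall>C. C \<subseteq> B \<and> infinite C \<longrightarrow> enum_apply \<Psi> C = A)"
    by (rule dir2)
qed

end
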